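(* Consider $\mathrm{USD}_p$ with $p\in[0,1]$, let $c_s>0$ be a constant, and let $\mathbf{x}(t_0)$ be a configuration at time $t_0$ with negative weighted bias $\Delta_{\bar{w}}(t_0) \geq c_s n$. Then, with probability at least $1-n^{-6}$, it holds that $\Delta_{\bar{w}}(t) \geq \Delta_{\bar{w}}(t_0)/2$ for all $t \in [t_0,t_0+\tau]$ for every $\tau \leq \Delta_{\bar{w}}^2(t_0)/(16\ln n)$.
   Context: Population protocol with $n$ agents, each in a state from $\{1,2,\bot\}$ (Opinion 1, Opinion 2, undecided). At each time step a scheduler picks an ordered pair $(i,j)$ of agents uniformly at random, independently of the past; only the initiator $i$ changes state. In $\mathrm{USD}_p$: if the initiator is $2$ and the responder $1$, the initiator becomes $\bot$; if the initiator is $1$ and the responder $2$, the initiator becomes $\bot$ with probability $1-p$ and otherwise stays $1$; if the initiator is $\bot$, it adopts the responder's state; otherwise nothing changes. $x_1(t),x_2(t),u(t)$ are the numbers of agents in states $1,2,\bot$ after $t$ interactions. The negative weighted bias is $\Delta_{\bar{w}}(t) := (1-p)x_2(t) - x_1(t)$. *)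

theory Defs
  imports "HOL-Probability.Probability"
begin

datatype opinion = Op1 | Op2 | Undec

text \<open>A configuration assigns a state to every agent; only agents 0..n-1 matter.\<close>
type_synonym config = "nat \<Rightarrow> opinion"

definition interact :: "real \<Rightarrow> opinion \<Rightarrow> opinion \<Rightarrow> opinion pmf" where
  "interact p a b =
     (if a = Op2 \<and> b = Op1 then return_pmf Undec
      else if a = Op1 \<and> b = Op2 then
        map_pmf (\<lambda>stay. if stay then Op1 else Undec) (bernoulli_pmf p)
      else if a = Undec then return_pmf b
      else return_pmf a)"

definition step :: "nat \<Rightarrow> real \<Rightarrow> config \<Rightarrow> config pmf" where
  "step n p c =
     pmf_of_set {(i, j). i < n \<and> j < n \<and> i \<noteq> j} \<bind>
       (\<lambda>(i, j). map_pmf (\<lambda>s. c(i := s)) (interact p (c i) (c j)))"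

text \<open>Distribution of the trajectory [x(0), x(1), ..., x(k)] of the first k interactions
  started from configuration c.\<close>
fun traj :: "nat \<Rightarrow> real \<Rightarrow> config \<Rightarrow> nat \<Rightarrow> config list pmf" where
  "traj n p c 0 = return_pmf [c]"
| "traj n p c (Suc k) =
     traj n p c k \<bind> (\<lambda>xs. map_pmf (\<lambda>c'. xs @ [c']) (step n p (last xs)))"

definition cnt :: "nat \<Rightarrow> opinion \<Rightarrow> config \<Rightarrow> nat" where
  "cnt n s c = card {i. i < n \<and> c i = s}"

definition neg_wbias :: "nat \<Rightarrow> real \<Rightarrow> config \<Rightarrow> real" where
  "neg_wbias n p c = (1 - p) * real (cnt n Op2 c) - real (cnt n Op1 c)"

end

theory Submission
  imports Defs
begin

lemma exp_quad: fixes y :: real assumes "\<bar>y\<bar> \<le> 1" shows "exp y \<le> 1 + y + y\<^sup>2"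
proof (cases "y \<ge> 0")
  case True then show ?thesis using exp_bound assms by auto
next
  case False
  define t where "t = -y"
  have t: "t \<ge> 0" using False t_def by auto
  have e: "exp t \<ge> 1 + t" by (rule exp_ge_add_one_self)
  have "exp y = 1 / exp t" by (simp add: t_def exp_minus field_simps)
  also have "\<dots> \<le> 1 / (1 + t)" using e t by (intro divide_left_mono) auto
  also have "\<dots> \<le> 1 - t + t\<^sup>2" using t by (simp add: field_simps power2_eq_square)
  finally show ?thesis by (simp add: t_def)
qed

lemma key_ineq:
  fixes q l m x1 x2 u N :: real
  assumes q: "0 \<le> q" "q \<le> 1" and l: "0 < l" "l \<le> 1/5" and m: "m = 5 * l\<^sup>2"
    and x: "0 \<le> x1" "0 \<le> x2" "0 \<le> u" "x1 + x2 + u = N"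
    and d: "q * x2 - x1 \<ge> 9 * l * N"
  shows "x1 * x2 * ((exp (l*q - m) - 1) + q * (exp (-m-l) - 1))
         + u * (x1 * (exp (l+m) - 1) + x2 * (exp (m - l*q) - 1)) \<le> 0"
proof -
  have ml: "0 \<le> m" "m \<le> l" using l m by (auto simp: power2_eq_square)
  have lq: "0 \<le> l*q" "l*q \<le> l" using q l by (auto simp: mult_left_le)
  have a1: "\<bar>l*q - m\<bar> \<le> l" using ml lq by auto
  have a2: "\<bar>-m-l\<bar> \<le> 2*l" "\<bar>l+m\<bar> \<le> 2*l" using ml l by auto
  have a3: "\<bar>m - l*q\<bar> \<le> l" using ml lq by auto
  have s1: "(l*q - m)\<^sup>2 \<le> l\<^sup>2" using a1 by (metis abs_le_square_iff abs_of_pos l(1))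
  have s2: "(-m-l)\<^sup>2 \<le> 4*l\<^sup>2" "(l+m)\<^sup>2 \<le> 4*l\<^sup>2"
    using a2 l abs_le_square_iff[of _ "2*l"] by (auto simp: power2_eq_square)
  have s3: "(m - l*q)\<^sup>2 \<le> l\<^sup>2" using a3 by (metis abs_le_square_iff abs_of_pos l(1))
  have e1: "exp (l*q - m) \<le> 1 + (l*q - m) + (l*q - m)\<^sup>2" using a1 l by (intro exp_quad) auto
  have e2: "exp (-m-l) \<le> 1 + (-m-l) + (-m-l)\<^sup>2" using a2 l by (intro exp_quad) auto
  have e3: "exp (l+m) \<le> 1 + (l+m) + (l+m)\<^sup>2" using a2 l by (intro exp_quad) auto
  have e4: "exp (m - l*q) \<le> 1 + (m - l*q) + (m - l*q)\<^sup>2" using a3 l by (intro exp_quad) auto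
  have A: "(exp (l*q - m) - 1) + q * (exp (-m-l) - 1) \<le> 0"
  proof -
    have "q * (exp (-m-l) - 1) \<le> q * ((-m-l) + 4*l\<^sup>2)"
      using e2 s2 q by (intro mult_left_mono) auto
    also have "\<dots> = - (q*m) - l*q + 4*(q*l\<^sup>2)" by (simp add: algebra_simps)
    finally have "q * (exp (-m-l) - 1) \<le> - (q*m) - l*q + 4*(q*l\<^sup>2)" .
    moreover have "q*m = 5*(q*l\<^sup>2)" using m by simp
    moreover have "q*l\<^sup>2 \<ge> 0" using q by simp
    ultimately show ?thesis using e1 s1 m zero_le_power2[of l] by linarith
  qed
  have C: "x1 * (exp (l+m) - 1) + x2 * (exp (m - l*q) - 1) \<le> 0"
  proof -
    have "x1 * (exp (l+m) - 1) \<le> x1 * (l + 9 * l\<^sup>2)"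
      using e3 s2 m x by (intro mult_left_mono) auto
    moreover have "exp (m - l*q) - 1 \<le> - l*q + 9 * l\<^sup>2"
      using e4 s3 m zero_le_power2[of l] by linarith
    then have "x2 * (exp (m - l*q) - 1) \<le> x2 * (- l*q + 9 * l\<^sup>2)"
      using x by (intro mult_left_mono) auto
    moreover have "x1 * (l + 9 * l\<^sup>2) + x2 * (- l*q + 9 * l\<^sup>2) = - l * (q*x2 - x1) + 9*l\<^sup>2*(x1+x2)"
      by (simp add: algebra_simps)
    moreover have "- l * (q*x2 - x1) \<le> - l * (9*l*N)" using d l by simp
    moreover have "9*l\<^sup>2*(x1+x2) \<le> 9*l\<^sup>2*N" using x by (intro mult_left_mono) auto
    moreover have "- l * (9*l*N) + 9*l\<^sup>2*N = 0" by (simp add: power2_eq_square)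
    ultimately show ?thesis by linarith
  qed
  have "x1 * x2 * ((exp (l*q - m) - 1) + q * (exp (-m-l) - 1)) \<le> 0"
    using A x by (simp add: mult_nonneg_nonpos)
  moreover have "u * (x1 * (exp (l+m) - 1) + x2 * (exp (m - l*q) - 1)) \<le> 0"
    using C x by (simp add: mult_nonneg_nonpos)
  ultimately show ?thesis by linarith
qed

lemma sum_cnt:
  fixes f :: "opinion \<Rightarrow> real"
  shows "(\<Sum>i<n. f (c i)) = real (cnt n Op1 c) * f Op1 + real (cnt n Op2 c) * f Op2 + real (cnt n Undec c) * f Undec"
proof (induction n)
  case 0 then show ?case by (simp add: cnt_def)
next
  case (Suc n)
  have cs: "cnt (Suc n) s c = cnt n s c + (if c n = s then 1 else 0)" for s
  proof (cases "c n = s")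
    case True
    have "{i. i < Suc n \<and> c i = s} = insert n {i. i < n \<and> c i = s}" using True by (auto simp: less_Suc_eq)
    then show ?thesis using True by (simp add: cnt_def)
  next
    case False
    have "{i. i < Suc n \<and> c i = s} = {i. i < n \<and> c i = s}" using False by (auto simp: less_Suc_eq)
    then show ?thesis using False by (simp add: cnt_def)
  qed
  show ?case using Suc by (cases "c n") (simp_all add: cs algebra_simps)
qed

lemma cnt_total: "real (cnt n Op1 c) + real (cnt n Op2 c) + real (cnt n Undec c) = real n"
  using sum_cnt[where f="\<lambda>_. 1" and n=n and c=c] by simp

definition wt :: "real \<Rightarrow> opinion \<Rightarrow> real" where
  "wt q a = (case a of Op1 \<Rightarrow> -1 | Op2 \<Rightarrow> q | Undec \<Rightarrow> 0)"
definition vv :: "real \<Rightarrow> real \<Rightarrow> real \<Rightarrow> opinion \<Rightarrow> real" where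
  "vv l m q a = - l * wt q a - m * (if a = Undec then 1 else 0)"
definition psi :: "nat \<Rightarrow> real \<Rightarrow> real \<Rightarrow> real \<Rightarrow> config \<Rightarrow> real" where
  "psi n l m q c = (\<Sum>i<n. vv l m q (c i))"

lemma psi_eq: "psi n l m (1-p) c = - l * neg_wbias n p c - m * real (cnt n Undec c)"
  unfolding psi_def by (subst sum_cnt) (simp add: vv_def wt_def neg_wbias_def algebra_simps)

lemma sum_upd:
  fixes f :: "opinion \<Rightarrow> real" and c :: config
  assumes "i < n"
  shows "(\<Sum>k<n. f ((c(i:=s)) k)) = (\<Sum>k<n. f (c k)) - f (c i) + f s"
proof -
  have h1: "(\<Sum>k<n. f ((c(i:=s)) k)) = f s + (\<Sum>k\<in>{..<n}-{i}. f ((c(i:=s)) k))"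
    using assms by (subst sum.remove[of "{..<n}" i]) simp_all
  have h2: "(\<Sum>k\<in>{..<n}-{i}. f ((c(i:=s)) k)) = (\<Sum>k\<in>{..<n}-{i}. f (c k))"
    by (intro sum.cong) auto
  have h3: "(\<Sum>k<n. f (c k)) = f (c i) + (\<Sum>k\<in>{..<n}-{i}. f (c k))"
    using assms by (subst sum.remove[of "{..<n}" i]) simp_all
  show ?thesis using h1 h2 h3 by simp
qed

definition pairs :: "nat \<Rightarrow> (nat \<times> nat) set" where
  "pairs n = {(i, j). i < n \<and> j < n \<and> i \<noteq> j}"

lemma pairs_fin: "finite (pairs n)"
  by (rule finite_subset[of _ "{..<n} \<times> {..<n}"]) (auto simp: pairs_def)

lemma pairs_ne: "n \<ge> 2 \<Longrightarrow> pairs n \<noteq> {}"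
proof -
  assume "n \<ge> 2"
  then have "(0,1) \<in> pairs n" by (auto simp: pairs_def)
  then show ?thesis by auto
qed

lemma sum_pairs:
  fixes h :: "opinion \<Rightarrow> opinion \<Rightarrow> real"
  assumes "\<And>a. h a a = 0"
  shows "(\<Sum>(i,j)\<in>pairs n. h (c i) (c j)) = (\<Sum>i<n. \<Sum>j<n. h (c i) (c j))"
proof -
  have "(\<Sum>i<n. \<Sum>j<n. h (c i) (c j)) = (\<Sum>(i,j)\<in>{..<n}\<times>{..<n}. h (c i) (c j))"
    by (simp add: sum.cartesian_product)
  also have "\<dots> = (\<Sum>(i,j)\<in>pairs n. h (c i) (c j))"
    by (rule sum.mono_neutral_right) (auto simp: pairs_def assms)
  finally show ?thesis by simp
qed

lemma sum_sq:
  fixes h :: "opinion \<Rightarrow> opinion \<Rightarrow> real"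
  shows "(\<Sum>i<n. \<Sum>j<n. h (c i) (c j)) =
    real (cnt n Op1 c) * (real (cnt n Op1 c) * h Op1 Op1 + real (cnt n Op2 c) * h Op1 Op2 + real (cnt n Undec c) * h Op1 Undec)
  + real (cnt n Op2 c) * (real (cnt n Op1 c) * h Op2 Op1 + real (cnt n Op2 c) * h Op2 Op2 + real (cnt n Undec c) * h Op2 Undec)
  + real (cnt n Undec c) * (real (cnt n Op1 c) * h Undec Op1 + real (cnt n Op2 c) * h Undec Op2 + real (cnt n Undec c) * h Undec Undec)"
proof -
  define x1 where "x1 = real (cnt n Op1 c)"
  define x2 where "x2 = real (cnt n Op2 c)"
  define u where "u = real (cnt n Undec c)"
  have e1: "(\<Sum>j<n. h a (c j)) = x1 * h a Op1 + x2 * h a Op2 + u * h a Undec" for a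
    unfolding x1_def x2_def u_def by (rule sum_cnt)
  have e2: "(\<Sum>i<n. h (c i) b) = x1 * h Op1 b + x2 * h Op2 b + u * h Undec b" for b
    unfolding x1_def x2_def u_def by (rule sum_cnt[where f="\<lambda>a. h a b"])
  have "(\<Sum>i<n. \<Sum>j<n. h (c i) (c j)) = (\<Sum>i<n. x1 * h (c i) Op1 + x2 * h (c i) Op2 + u * h (c i) Undec)"
    by (simp add: e1)
  also have "\<dots> = x1 * (\<Sum>i<n. h (c i) Op1) + x2 * (\<Sum>i<n. h (c i) Op2) + u * (\<Sum>i<n. h (c i) Undec)"
    by (simp add: sum.distrib sum_distrib_left)
  also have "\<dots> = x1 * (x1 * h Op1 Op1 + x2 * h Op2 Op1 + u * h Undec Op1)
     + x2 * (x1 * h Op1 Op2 + x2 * h Op2 Op2 + u * h Undec Op2)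
     + u * (x1 * h Op1 Undec + x2 * h Op2 Undec + u * h Undec Undec)"
    by (simp add: e2)
  finally show ?thesis unfolding x1_def[symmetric] x2_def[symmetric] u_def[symmetric] by (simp add: algebra_simps)
qed

lemma interact_fin: "finite (set_pmf (interact p a b))"
  by (simp add: interact_def)

lemma step_fin: "n \<ge> 2 \<Longrightarrow> finite (set_pmf (step n p c))"
  unfolding step_def using pairs_fin[of n] pairs_ne[of n]
  by (auto simp: set_bind_pmf interact_fin pairs_def split: prod.splits)

lemma traj_len: "xs \<in> set_pmf (traj n p c k) \<Longrightarrow> length xs = Suc k"
  by (induction k arbitrary: xs) (auto simp: set_bind_pmf)

lemma traj_fin: "n \<ge> 2 \<Longrightarrow> finite (set_pmf (traj n p c k))"
  by (induction k) (auto simp: set_bind_pmf step_fin)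

lemma exp_bind_fin:
  fixes f :: "'b \<Rightarrow> real"
  assumes "finite (set_pmf M)" "\<And>x. x \<in> set_pmf M \<Longrightarrow> finite (set_pmf (N x))"
  shows "measure_pmf.expectation (M \<bind> N) f = measure_pmf.expectation M (\<lambda>x. measure_pmf.expectation (N x) f)"
proof -
  have "measure_pmf.expectation (M \<bind> N) f = (\<Sum>a\<in>set_pmf M. pmf M a *\<^sub>R measure_pmf.expectation (N a) f)"
    using assms by (intro pmf_expectation_bind) auto
  also have "\<dots> = measure_pmf.expectation M (\<lambda>x. measure_pmf.expectation (N x) f)"
    using assms by (subst integral_measure_pmf[of "set_pmf M"]) auto
  finally show ?thesis .
qed


lemma S_lemma:
  fixes h :: "opinion \<Rightarrow> opinion \<Rightarrow> real"
  assumes h0: "\<And>a. h a a = 0"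
  and hv: "h Op1 Undec = 0" "h Op2 Undec = 0"
      "h Op2 Op1 = A" "h Undec Op1 = B" "h Undec Op2 = C" "h Op1 Op2 = D"
  shows "(\<Sum>(i,j)\<in>pairs n. h (c i) (c j)) = real (cnt n Op1 c) * real (cnt n Op2 c) * (A + D)
         + real (cnt n Undec c) * (real (cnt n Op1 c) * B + real (cnt n Op2 c) * C)"
  unfolding sum_pairs[of h, OF h0] sum_sq
  by (simp add: h0 hv algebra_simps)

definition R :: "real \<Rightarrow> real \<Rightarrow> real \<Rightarrow> real \<Rightarrow> opinion \<Rightarrow> opinion \<Rightarrow> real" where
  "R l m q p a b = measure_pmf.expectation (interact p a b) (\<lambda>s. exp (vv l m q s - vv l m q a))"

lemma R_vals:
  assumes "0 \<le> p" "p \<le> 1"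
  shows "R l m q p a a = 1" "R l m q p Op1 Undec = 1" "R l m q p Op2 Undec = 1"
    "R l m q p Op2 Op1 = exp (l*q - m)" "R l m q p Op1 Op2 = p + (1-p) * exp (-m-l)"
    "R l m q p Undec Op1 = exp (l+m)" "R l m q p Undec Op2 = exp (m - l*q)"
proof -
  show "R l m q p a a = 1" by (cases a) (simp_all add: R_def interact_def)
  show "R l m q p Op1 Undec = 1" "R l m q p Op2 Undec = 1"
    by (simp_all add: R_def interact_def)
  show "R l m q p Op2 Op1 = exp (l*q - m)" "R l m q p Undec Op1 = exp (l+m)" "R l m q p Undec Op2 = exp (m - l*q)"
    by (simp_all add: R_def interact_def vv_def wt_def)
  show "R l m q p Op1 Op2 = p + (1-p) * exp (-m-l)"
    using assms by (simp add: R_def interact_def vv_def wt_def)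
qed

lemma step_exp:
  assumes n: "n \<ge> 2"
  shows "measure_pmf.expectation (step n p c) (\<lambda>c'. exp (psi n l m q c'))
     = exp (psi n l m q c) * (\<Sum>(i,j)\<in>pairs n. R l m q p (c i) (c j)) / real (card (pairs n))"
proof -
  have st: "step n p c = pmf_of_set (pairs n) \<bind> (\<lambda>(i, j). map_pmf (\<lambda>s. c(i := s)) (interact p (c i) (c j)))"
    by (simp add: step_def pairs_def)
  have inner: "measure_pmf.expectation (map_pmf (\<lambda>s. c(i := s)) (interact p (c i) (c j))) (\<lambda>c'. exp (psi n l m q c'))
      = exp (psi n l m q c) * R l m q p (c i) (c j)" if "(i,j) \<in> pairs n" for i j
  proof -
    have i: "i < n" using that by (simp add: pairs_def)
    have "\<And>s. exp (psi n l m q (c(i := s))) = exp (psi n l m q c) * exp (vv l m q s - vv l m q (c i))"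
      unfolding psi_def using sum_upd[OF i, of "vv l m q" c] by (simp add: exp_add[symmetric])
    then show ?thesis by (simp add: R_def)
  qed
  have inner': "measure_pmf.expectation (interact p (c i) (c j)) (\<lambda>x. exp (psi n l m q (c(i := x))))
      = exp (psi n l m q c) * R l m q p (c i) (c j)" if "(i,j) \<in> pairs n" for i j
    using inner[OF that] by simp
  have "measure_pmf.expectation (step n p c) (\<lambda>c'. exp (psi n l m q c'))
      = (\<Sum>a\<in>pairs n. measure_pmf.expectation ((\<lambda>(i, j). map_pmf (\<lambda>s. c(i := s)) (interact p (c i) (c j))) a) (\<lambda>c'. exp (psi n l m q c')) /\<^sub>R real (card (pairs n)))"
    unfolding st using pairs_ne[OF n] pairs_fin
    by (intro pmf_expectation_bind_pmf_of_set) (auto simp: interact_fin)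
  also have "\<dots> = (\<Sum>(i,j)\<in>pairs n. exp (psi n l m q c) * R l m q p (c i) (c j) / real (card (pairs n)))"
    by (intro sum.cong) (auto simp: inner' field_simps)
  also have "\<dots> = exp (psi n l m q c) * (\<Sum>(i,j)\<in>pairs n. R l m q p (c i) (c j)) / real (card (pairs n))"
    by (simp add: sum_divide_distrib sum_distrib_left case_prod_unfold)
  finally show ?thesis .
qed

lemma step_super:
  assumes n: "n \<ge> 2" and p: "0 \<le> p" "p \<le> 1" and q: "q = 1 - p"
    and l: "0 < l" "l \<le> 1/5" and m: "m = 5 * l\<^sup>2"
    and d: "neg_wbias n p c \<ge> 9 * l * real n"
  shows "measure_pmf.expectation (step n p c) (\<lambda>c'. exp (psi n l m q c')) \<le> exp (psi n l m q c)"
proof -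
  define h where "h a b = R l m q p a b - 1" for a b
  have h0: "h a a = 0" for a using R_vals[OF p] by (simp add: h_def)
  define x1 where "x1 = real (cnt n Op1 c)"
  define x2 where "x2 = real (cnt n Op2 c)"
  define u where "u = real (cnt n Undec c)"
  have hv: "h Op1 Undec = 0" "h Op2 Undec = 0"
      "h Op2 Op1 = exp (l*q - m) - 1" "h Undec Op1 = exp (l+m) - 1" "h Undec Op2 = exp (m - l*q) - 1"
    unfolding h_def R_vals(2,3,4,6,7)[OF p] by simp_all
  have hv2: "h Op1 Op2 = q * (exp (-m-l) - 1)"
    unfolding h_def R_vals(5)[OF p] q by (simp add: algebra_simps)
  have S: "(\<Sum>(i,j)\<in>pairs n. h (c i) (c j)) = x1 * x2 * ((exp (l*q - m) - 1) + q * (exp (-m-l) - 1))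
         + u * (x1 * (exp (l+m) - 1) + x2 * (exp (m - l*q) - 1))"
    unfolding x1_def x2_def u_def by (rule S_lemma[OF h0 hv hv2])
  have "x1 * x2 * ((exp (l*q - m) - 1) + q * (exp (-m-l) - 1))
         + u * (x1 * (exp (l+m) - 1) + x2 * (exp (m - l*q) - 1)) \<le> 0"
  proof -
    have qb: "0 \<le> q" "q \<le> 1" using p q by auto
    have dd: "q * x2 - x1 \<ge> 9*l*real n" using d by (simp add: neg_wbias_def q x1_def x2_def)
    have tot: "x1 + x2 + u = real n" using cnt_total[of n c] by (simp add: x1_def x2_def u_def)
    show ?thesis by (rule key_ineq[OF qb l m _ _ _ tot dd]) (simp_all add: x1_def x2_def u_def)
  qed
  then have S0: "(\<Sum>(i,j)\<in>pairs n. h (c i) (c j)) \<le> 0" using S by simp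
  have "(\<Sum>(i,j)\<in>pairs n. R l m q p (c i) (c j)) = (\<Sum>(i,j)\<in>pairs n. h (c i) (c j) + 1)"
    by (intro sum.cong) (auto simp: h_def)
  also have "\<dots> = (\<Sum>(i,j)\<in>pairs n. h (c i) (c j)) + real (card (pairs n))"
    by (simp add: sum.distrib case_prod_unfold)
  finally have "(\<Sum>(i,j)\<in>pairs n. R l m q p (c i) (c j)) \<le> real (card (pairs n))" using S0 by simp
  moreover have "real (card (pairs n)) > 0" using pairs_ne[OF n] pairs_fin[of n] by (simp add: card_gt_0_iff)
  ultimately have "(\<Sum>(i,j)\<in>pairs n. R l m q p (c i) (c j)) / real (card (pairs n)) \<le> 1" by simp
  then have "exp (psi n l m q c) * ((\<Sum>(i,j)\<in>pairs n. R l m q p (c i) (c j)) / real (card (pairs n))) \<le> exp (psi n l m q c) * 1"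
    by (intro mult_left_mono) auto
  then show ?thesis unfolding step_exp[OF n] times_divide_eq_right[symmetric] mult_1_right .
qed

lemma cnt_le: "real (cnt n s c) \<le> real n"
  using cnt_total[of n c] by (cases s) auto

lemma main_bound:
  fixes p l m D :: real
  assumes n: "n \<ge> 2" and p: "0 \<le> p" "p \<le> 1"
    and l: "0 < l" "l \<le> 1/5" and m: "m = 5 * l\<^sup>2"
    and D: "D/2 \<ge> 9 * l * real n"
    and x0: "neg_wbias n p x0 \<ge> D/2"
  shows "measure_pmf.prob (traj n p x0 \<tau>) {xs. \<forall>t\<le>\<tau>. neg_wbias n p (xs ! t) \<ge> D/2}
     \<ge> 1 - exp (psi n l m (1-p) x0) / exp (- l * D/2 - m * real n)"
proof -
  define q where "q = 1 - p"
  define B where "B = exp (- l * D/2 - m * real n)"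
  define G where "G c \<longleftrightarrow> neg_wbias n p c \<ge> D/2" for c
  define \<Phi> where "\<Phi> c = exp (psi n l m q c)" for c
  define W where "W xs = (if (\<forall>y\<in>set xs. G y) then \<Phi> (last xs) else B)" for xs
  have l0: "0 \<le> l" "0 \<le> m" using l m by auto
  have Bpos: "B > 0" by (simp add: B_def)
  have Ble: "B \<le> \<Phi> c" if "\<not> G c" for c
  proof -
    have "neg_wbias n p c < D/2" using that by (simp add: G_def)
    then have "l * neg_wbias n p c \<le> l * (D/2)" using l0 by (intro mult_left_mono) auto
    moreover have "m * real (cnt n Undec c) \<le> m * real n" using l0 cnt_le by (intro mult_left_mono) auto
    ultimately have "- l * D/2 - m * real n \<le> psi n l m q c"
      unfolding q_def psi_eq by simp
    then show ?thesis by (simp add: B_def \<Phi>_def)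
  qed
  have super: "measure_pmf.expectation (step n p c) \<Phi> \<le> \<Phi> c" if "G c" for c
    unfolding \<Phi>_def using that D
    by (intro step_super[OF n p q_def l m]) (simp add: G_def)
  have W0: "0 \<le> W xs" for xs by (simp add: W_def \<Phi>_def B_def)
  have ind: "measure_pmf.expectation (traj n p x0 k) W \<le> \<Phi> x0" for k
  proof (induction k)
    case 0 show ?case using x0 by (simp add: W_def G_def)
  next
    case (Suc k)
    have "measure_pmf.expectation (traj n p x0 (Suc k)) W = measure_pmf.expectation (traj n p x0 k)
       (\<lambda>xs. measure_pmf.expectation (map_pmf (\<lambda>c'. xs @ [c']) (step n p (last xs))) W)"
      unfolding traj.simps
      by (rule exp_bind_fin[OF traj_fin[OF n]]) (simp add: step_fin[OF n])
    also have "\<dots> \<le> measure_pmf.expectation (traj n p x0 k) W"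
    proof (rule integral_mono_AE)
      show "integrable (measure_pmf (traj n p x0 k)) W"
        "integrable (measure_pmf (traj n p x0 k))
          (\<lambda>xs. measure_pmf.expectation (map_pmf (\<lambda>c'. xs @ [c']) (step n p (last xs))) W)"
        by (auto intro!: integrable_measure_pmf_finite traj_fin[OF n])
      show "AE xs in measure_pmf (traj n p x0 k).
          measure_pmf.expectation (map_pmf (\<lambda>c'. xs @ [c']) (step n p (last xs))) W \<le> W xs"
        unfolding AE_measure_pmf_iff
      proof (intro ballI)
        fix xs assume xs: "xs \<in> set_pmf (traj n p x0 k)"
        then have ne: "xs \<noteq> []" using traj_len[OF xs] by auto
        show "measure_pmf.expectation (map_pmf (\<lambda>c'. xs @ [c']) (step n p (last xs))) W \<le> W xs"
        proof (cases "\<forall>y\<in>set xs. G y")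
          case True
          have "measure_pmf.expectation (map_pmf (\<lambda>c'. xs @ [c']) (step n p (last xs))) W
              = measure_pmf.expectation (step n p (last xs)) (\<lambda>c'. W (xs @ [c']))" by simp
          also have "\<dots> \<le> measure_pmf.expectation (step n p (last xs)) \<Phi>"
          proof (rule integral_mono)
            show "integrable (measure_pmf (step n p (last xs))) (\<lambda>c'. W (xs @ [c']))"
              "integrable (measure_pmf (step n p (last xs))) \<Phi>"
              by (auto intro!: integrable_measure_pmf_finite step_fin[OF n])
            fix c' show "W (xs @ [c']) \<le> \<Phi> c'" using True Ble by (auto simp: W_def)
          qed
          also have "\<dots> \<le> \<Phi> (last xs)" using True ne by (intro super) auto
          also have "\<dots> = W xs" using True by (simp add: W_def)
          finally show ?thesis .
        next
          case False
          then have eq: "(\<lambda>c'. W (xs @ [c'])) = (\<lambda>_. B)" by (intro ext) (auto simp: W_def)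
          have "measure_pmf.expectation (map_pmf (\<lambda>c'. xs @ [c']) (step n p (last xs))) W
              = measure_pmf.expectation (step n p (last xs)) (\<lambda>c'. W (xs @ [c']))" by simp
          also have "\<dots> = B" unfolding eq by simp
          also have "B = W xs" using False unfolding W_def using False by auto
          finally show ?thesis by simp
        qed
      qed
    qed
    finally show ?case using Suc.IH by linarith
  qed
  define bad where "bad = {xs. \<not>(\<forall>t\<le>\<tau>. neg_wbias n p (xs ! t) \<ge> D/2)}"
  have "measure_pmf.expectation (traj n p x0 \<tau>) (\<lambda>xs. B * indicator bad xs) \<le> measure_pmf.expectation (traj n p x0 \<tau>) W"
  proof (rule integral_mono_AE)
    show "integrable (measure_pmf (traj n p x0 \<tau>)) W"
      "integrable (measure_pmf (traj n p x0 \<tau>)) (\<lambda>xs. B * indicator bad xs)"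
      by (auto intro!: integrable_measure_pmf_finite traj_fin[OF n])
    show "AE xs in measure_pmf (traj n p x0 \<tau>). B * indicator bad xs \<le> W xs"
      unfolding AE_measure_pmf_iff
    proof (intro ballI)
      fix xs assume xs: "xs \<in> set_pmf (traj n p x0 \<tau>)"
      show "B * indicator bad xs \<le> W xs"
      proof (cases "xs \<in> bad")
        case True
        then obtain t where t: "t \<le> \<tau>" "\<not> G (xs ! t)" by (auto simp: bad_def G_def)
        have "xs ! t \<in> set xs" using t traj_len[OF xs] by auto
        then have "W xs = B" using t by (auto simp: W_def)
        then show ?thesis using True by simp
      next
        case False then show ?thesis using W0 by simp
      qed
    qed
  qed
  also have "\<dots> \<le> \<Phi> x0" by (rule ind)
  finally have "B * measure_pmf.prob (traj n p x0 \<tau>) bad \<le> \<Phi> x0" by simp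
  then have pb: "measure_pmf.prob (traj n p x0 \<tau>) bad \<le> \<Phi> x0 / B" using Bpos by (simp add: field_simps)
  have "measure_pmf.prob (traj n p x0 \<tau>) {xs. \<forall>t\<le>\<tau>. neg_wbias n p (xs ! t) \<ge> D/2} = 1 - measure_pmf.prob (traj n p x0 \<tau>) bad"
  proof -
    have cg: "{xs. \<forall>t\<le>\<tau>. neg_wbias n p (xs ! t) \<ge> D/2} = space (measure_pmf (traj n p x0 \<tau>)) - bad"
      by (auto simp: bad_def)
    show ?thesis unfolding cg by (rule measure_pmf.prob_compl) simp
  qed
  then show ?thesis using pb by (simp add: \<Phi>_def B_def q_def)
qed


lemma exp_small:
  fixes k :: real
  assumes k: "k > 0" and n: "real n \<ge> (7/k)^7" "n \<ge> 1"
  shows "exp (- k * real n) \<le> real n powr (-6)"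
proof -
  define y where "y = k * real n / 7"
  have y0: "y \<ge> 0" using k by (simp add: y_def)
  have e7: "exp (k * real n) = exp y ^ 7"
    unfolding y_def using exp_of_nat_mult[of 7 "k * real n / 7"] by simp
  have "y \<le> exp y" using exp_ge_add_one_self[of y] by linarith
  then have "y ^ 7 \<le> exp y ^ 7" using y0 by (intro power_mono) auto
  moreover have "y ^ 7 = (k/7)^7 * real n ^ 7" by (simp add: y_def power_mult_distrib field_simps)
  moreover have "(k/7)^7 * real n ^ 7 \<ge> real n ^ 6"
  proof -
    have "(k/7)^7 * real n \<ge> (k/7)^7 * (7/k)^7" using n k by (intro mult_left_mono) auto
    also have "(k/7)^7 * (7/k)^7 = 1" using k by (simp add: power_mult_distrib[symmetric])
    finally have h: "(k/7)^7 * real n \<ge> 1" .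
    have "real n ^ 6 * 1 \<le> real n ^ 6 * ((k/7)^7 * real n)" using h by (intro mult_left_mono) auto
    moreover have "real n ^ 6 * ((k/7)^7 * real n) = (k/7)^7 * real n ^ 7"
      by (simp add: power_Suc2[symmetric] del: power_Suc2 | simp add: algebra_simps eval_nat_numeral)
    ultimately show ?thesis by simp
  qed
  ultimately have big: "real n ^ 6 \<le> exp (k * real n)" using e7 by linarith
  have np: "real n > 0" using n by simp
  have "exp (- k * real n) = 1 / exp (k * real n)" by (simp add: exp_minus field_simps)
  also have "\<dots> \<le> 1 / real n ^ 6" using big np by (intro divide_left_mono) auto
  also have "\<dots> = real n powr (-6)" using np by (simp add: powr_minus powr_realpow divide_inverse)
  finally show ?thesis .
qed

theorem lemma13:
  fixes p c_s :: real
  assumes "0 \<le> p" and "p \<le> 1" and "c_s > 0"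
  shows "\<exists>n0::nat. \<forall>n\<ge>n0. \<forall>x0::config. \<forall>\<tau>::nat.
           neg_wbias n p x0 \<ge> c_s * real n \<longrightarrow>
           real \<tau> \<le> (neg_wbias n p x0)\<^sup>2 / (16 * ln (real n)) \<longrightarrow>
           measure_pmf.prob (traj n p x0 \<tau>)
             {xs. \<forall>t\<le>\<tau>. neg_wbias n p (xs ! t) \<ge> neg_wbias n p x0 / 2}
             \<ge> 1 - real n powr (-6)"
proof -
  define l where "l = min (1/5) (c_s/18)"
  define m where "m = 5 * l\<^sup>2"
  define k where "k = l * c_s / 2 - m"
  have l: "0 < l" "l \<le> 1/5" "l \<le> c_s/18" using assms by (auto simp: l_def)
  have k: "k > 0"
  proof -
    have "l * l \<le> l * (c_s/18)" using l by (intro mult_left_mono) auto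
    moreover have "l * c_s > 0" using l assms by simp
    ultimately show ?thesis unfolding k_def m_def power2_eq_square by linarith
  qed
  define N0 where "N0 = max 2 (nat \<lceil>(7/k)^7\<rceil>)"
  show ?thesis
  proof (intro exI[of _ N0] allI impI)
    fix n x0 \<tau>
    assume n: "N0 \<le> n" and D: "neg_wbias n p x0 \<ge> c_s * real n"
    define D' where "D' = neg_wbias n p x0"
    have n2: "n \<ge> 2" using n by (simp add: N0_def)
    have nk: "real n \<ge> (7/k)^7" using n unfolding N0_def by linarith
    have D9: "D'/2 \<ge> 9 * l * real n"
    proof -
      have "18 * l * real n \<le> c_s * real n" using l by (intro mult_right_mono) auto
      then show ?thesis using D by (simp add: D'_def)
    qed
    have D0: "D' \<ge> 0" using D assms by (simp add: D'_def) (smt (verit) mult_nonneg_nonneg of_nat_0_le_iff)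
    have x0: "neg_wbias n p x0 \<ge> D'/2" using D0 by (simp add: D'_def)
    have mb: "measure_pmf.prob (traj n p x0 \<tau>) {xs. \<forall>t\<le>\<tau>. neg_wbias n p (xs ! t) \<ge> D'/2}
      \<ge> 1 - exp (psi n l m (1-p) x0) / exp (- l * D'/2 - m * real n)"
      by (rule main_bound[OF n2 assms(1,2) l(1,2) m_def D9 x0])
    have "exp (psi n l m (1-p) x0) / exp (- l * D'/2 - m * real n)
        = exp (psi n l m (1-p) x0 - (- l * D'/2 - m * real n))" by (simp add: exp_diff)
    also have "\<dots> \<le> exp (- k * real n)"
    proof -
      have m0: "m \<ge> 0" by (simp add: m_def)
      have "psi n l m (1-p) x0 \<le> - l * D'" unfolding psi_eq D'_def using m0 by simp
      moreover have "l * (c_s * real n) \<le> l * D'" using D l by (intro mult_left_mono) (auto simp: D'_def)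
      ultimately have "psi n l m (1-p) x0 - (- l * D'/2 - m * real n) \<le> - k * real n"
        unfolding k_def by (simp add: algebra_simps)
      then show ?thesis by simp
    qed
    also have "\<dots> \<le> real n powr (-6)" using exp_small[OF k nk] n2 by simp
    finally show "measure_pmf.prob (traj n p x0 \<tau>)
             {xs. \<forall>t\<le>\<tau>. neg_wbias n p (xs ! t) \<ge> neg_wbias n p x0 / 2}
             \<ge> 1 - real n powr (-6)" using mb by (simp add: D'_def)
  qed
qed

end
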